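(* Let $\Phi$ be a unit norm tight frame in $\mathbb{R}^d$ with $K$ atoms, frame constant $K/d$ and coherence $\mu$, and let $1\le S\le K$. Let $x$ be drawn from a symmetric probability distribution $\nu$ on $S^{K-1}$ and let $y=\Phi x$. Suppose there exists $\kappa>0$ such that $$\nu\Big(\min_{p,\sigma}\Big(\|P_{I_p}(\Phi)\Phi c_{p,\sigma}(x)\|_2-\max_{|I|\le S,\ I\neq I_p}\|P_I(\Phi)\Phi c_{p,\sigma}(x)\|_2\Big)\ge2\kappa\Big)=1,$$ where $I_p:=p^{-1}(\{1,\dots,S\})$ and the minimum is over all permutations $p$ and sign sequences $\sigma$. Then $\Phi$ is a local maximum of $\max_{\Psi\in\mathcal D}\mathbb{E}_y\big(\max_{|I|\le S}\|P_I(\Psi)y\|_2^2\big)$.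
   Context: $\mathcal D$ is the set of dictionaries $\Psi=(\psi_1,\dots,\psi_K)$, $\psi_i\in\mathbb{R}^d$, $\|\psi_i\|_2=1$; $P_I(\Psi)=\Psi_I\Psi_I^\dagger$ is the orthogonal projection onto the span of $(\psi_i)_{i\in I}$. A probability measure on $S^{K-1}$ is symmetric if invariant under coordinate sign flips and coordinate permutations. For $x\in S^{K-1}$, $c(x)=(c_1(x),\dots,c_K(x))$ is the non-increasing rearrangement of $(|x_1|,\dots,|x_K|)$, and $c_{p,\sigma}(x)(i)=\sigma_ic_{p(i)}(x)$. Unit norm tight frame: $\sum_i|\langle\phi_i,v\rangle|^2=(K/d)\|v\|_2^2$; coherence $\mu=\max_{i\ne j}|\langle\phi_i,\phi_j\rangle|$. *)

theory Defs
  imports "HOL-Analysis.Analysis" "HOL-Probability.Probability" "HOL-Library.Multiset"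
begin

text \<open>A dictionary with K atoms in R^d is a vector of K columns, Psi $ i = psi_i.\<close>

definition dictionaries :: "(real^'d^'k) set" where
  "dictionaries = {Psi. \<forall>i. norm (Psi $ i) = 1}"

definition orth_proj :: "('a::euclidean_space) set \<Rightarrow> 'a \<Rightarrow> 'a" where
  "orth_proj V y = (THE v. v \<in> V \<and> (\<forall>w\<in>V. inner (y - v) w = 0))"

definition P :: "'k set \<Rightarrow> real^'d^'k \<Rightarrow> real^'d \<Rightarrow> real^'d" where
  "P I Psi y = orth_proj (span ((\<lambda>i. Psi $ i) ` I)) y"

definition synth :: "real^'d^'k \<Rightarrow> real^'k \<Rightarrow> real^'d" where
  "synth Psi x = (\<Sum>i\<in>UNIV. (x $ i) *\<^sub>R (Psi $ i))"

text \<open>Non-increasing rearrangement of absolute values, 0-indexed: c x j is the (j+1)-th largest |x_i|.\<close>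
definition crearr :: "real^'k \<Rightarrow> nat \<Rightarrow> real" where
  "crearr x j = rev (sorted_list_of_multiset (image_mset (\<lambda>i. \<bar>x $ i\<bar>) (mset_set UNIV))) ! j"

definition cps :: "('k::finite \<Rightarrow> nat) \<Rightarrow> ('k \<Rightarrow> real) \<Rightarrow> real^'k \<Rightarrow> real^'k" where
  "cps p \<sigma> x = (\<chi> i. \<sigma> i * crearr x (p i))"

definition perms :: "('k::finite \<Rightarrow> nat) set" where
  "perms = {p. bij_betw p UNIV {0..<CARD('k)}}"

definition signs :: "('k \<Rightarrow> real) set" where
  "signs = {\<sigma>. \<forall>i. \<sigma> i \<in> {-1, 1}}"

definition unit_sphere :: "('a::real_normed_vector) set" where
  "unit_sphere = {x. norm x = 1}"

definition symmetric_measure :: "(real^'k::finite) measure \<Rightarrow> bool" where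
  "symmetric_measure \<nu> \<longleftrightarrow>
     prob_space \<nu> \<and> sets \<nu> = sets borel \<and> emeasure \<nu> unit_sphere = 1 \<and>
     (\<forall>\<sigma> \<in> signs. \<forall>q. bij (q :: 'k \<Rightarrow> 'k) \<longrightarrow>
        distr \<nu> borel (\<lambda>x. \<chi> i. \<sigma> i * x $ q i) = \<nu>)"

definition unit_norm_tight_frame :: "real^'d^'k \<Rightarrow> bool" where
  "unit_norm_tight_frame Phi \<longleftrightarrow>
     (\<forall>i. norm (Phi $ i) = 1) \<and>
     (\<forall>v. (\<Sum>i\<in>UNIV. (inner (Phi $ i) v)\<^sup>2) = (real CARD('k) / real CARD('d)) * (norm v)\<^sup>2)"

definition coherence :: "real^'d^'k \<Rightarrow> real" where
  "coherence Phi = Max {\<bar>inner (Phi $ i) (Phi $ j)\<bar> | i j. i \<noteq> j}"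

definition objective :: "(real^'k) measure \<Rightarrow> real^'d^'k \<Rightarrow> nat \<Rightarrow> real^'d^'k \<Rightarrow> real" where
  "objective \<nu> Phi S Psi =
     (\<integral>x. Max {(norm (P I Psi (synth Phi x)))\<^sup>2 | I. card I \<le> S} \<partial>\<nu>)"

definition local_max_on :: "'a::metric_space set \<Rightarrow> ('a \<Rightarrow> real) \<Rightarrow> 'a \<Rightarrow> bool" where
  "local_max_on A f a \<longleftrightarrow> a \<in> A \<and> (\<exists>\<epsilon>>0. \<forall>b\<in>A. dist b a < \<epsilon> \<longrightarrow> f b \<le> f a)"

end

theory Submission
  imports Defs "HOL-Combinatorics.Permutations"
begin

lemma orth_proj_ex1:
  fixes V :: "'a::euclidean_space set"
  assumes "subspace V"
  shows "\<exists>!v. v \<in> V \<and> (\<forall>w\<in>V. inner (y - v) w = 0)"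
proof -
  obtain a z where a: "a \<in> span V" and z: "\<And>w. w \<in> span V \<Longrightarrow> orthogonal z w" and y: "y = a + z"
    using orthogonal_subspace_decomp_exists by blast
  have sV: "span V = V" using assms by simp
  have ex: "a \<in> V \<and> (\<forall>w\<in>V. inner (y - a) w = 0)"
    using a z y sV by (auto simp: orthogonal_def)
  show ?thesis
  proof (rule ex1I[of _ a])
    show "a \<in> V \<and> (\<forall>w\<in>V. inner (y - a) w = 0)" by (rule ex)
  next
    fix v assume v: "v \<in> V \<and> (\<forall>w\<in>V. inner (y - v) w = 0)"
    have d: "v - a \<in> V" using v ex assms subspace_diff by blast
    have "inner (y - v) (v - a) = 0" "inner (y - a) (v - a) = 0" using v ex d by auto
    then have "inner (v - a) (v - a) = 0" by (simp add: inner_diff_left inner_diff_right)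
    then show "v = a" by simp
  qed
qed

lemma orth_proj_prop:
  fixes V :: "'a::euclidean_space set"
  assumes "subspace V"
  shows "orth_proj V y \<in> V \<and> (\<forall>w\<in>V. inner (y - orth_proj V y) w = 0)"
  unfolding orth_proj_def using theI'[OF orth_proj_ex1[OF assms]] .

lemma orth_proj_in: "subspace V \<Longrightarrow> orth_proj V y \<in> V"
  using orth_proj_prop by blast

lemma orth_proj_orth: "subspace V \<Longrightarrow> w \<in> V \<Longrightarrow> inner (y - orth_proj V y) w = 0"
  using orth_proj_prop by blast

lemma orth_proj_eqI:
  fixes V :: "'a::euclidean_space set"
  assumes "subspace V" "v \<in> V" "\<And>w. w \<in> V \<Longrightarrow> inner (y - v) w = 0"
  shows "orth_proj V y = v"
  using orth_proj_ex1[OF assms(1), of y] orth_proj_prop[OF assms(1), of y] assms by blast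

lemma orth_proj_fixed: "subspace V \<Longrightarrow> v \<in> V \<Longrightarrow> orth_proj V v = v"
  by (rule orth_proj_eqI) auto

lemma orth_proj_linear:
  fixes V :: "'a::euclidean_space set"
  assumes "subspace V"
  shows "linear (orth_proj V)"
proof (rule linearI)
  fix x y
  show "orth_proj V (x + y) = orth_proj V x + orth_proj V y"
    apply (rule orth_proj_eqI[OF assms])
    using orth_proj_in[OF assms] subspace_add[OF assms] apply blast
    using orth_proj_orth[OF assms, of _ x] orth_proj_orth[OF assms, of _ y]
    by (simp add: algebra_simps inner_diff_left inner_add_left)
next
  fix c x
  show "orth_proj V (c *\<^sub>R x) = c *\<^sub>R orth_proj V x"
    apply (rule orth_proj_eqI[OF assms])
    using orth_proj_in[OF assms] subspace_scale[OF assms] apply blast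
    using orth_proj_orth[OF assms, of _ x]
    by (simp add: inner_diff_left flip: scaleR_diff_right)
qed

lemma orth_proj_pyth:
  fixes V :: "'a::euclidean_space set"
  assumes "subspace V"
  shows "(norm y)\<^sup>2 = (norm (orth_proj V y))\<^sup>2 + (norm (y - orth_proj V y))\<^sup>2"
proof -
  let ?p = "orth_proj V y"
  have o: "inner (y - ?p) ?p = 0" using orth_proj_orth[OF assms orth_proj_in[OF assms]] .
  have "y = ?p + (y - ?p)" by simp
  then have "(norm y)\<^sup>2 = (norm (?p + (y - ?p)))\<^sup>2" by simp
  also have "\<dots> = (norm ?p)\<^sup>2 + (norm (y - ?p))\<^sup>2"
    using o norm_add_Pythagorean[of ?p "y - ?p"] by (simp add: orthogonal_def inner_commute)
  finally show ?thesis .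
qed

lemma orth_proj_norm_le: "subspace V \<Longrightarrow> norm (orth_proj V y) \<le> norm (y::'a::euclidean_space)"
  using orth_proj_pyth[of V y]
  by (metis le_add_same_cancel1 norm_ge_zero power2_le_iff_abs_le zero_le_power2 abs_of_nonneg)

lemma orth_proj_min:
  fixes V :: "'a::euclidean_space set"
  assumes "subspace V" "v \<in> V"
  shows "norm (y - orth_proj V y) \<le> norm (y - v)"
proof -
  let ?p = "orth_proj V y"
  have d: "?p - v \<in> V" using orth_proj_in[OF assms(1)] assms subspace_diff by blast
  have o: "inner (y - ?p) (?p - v) = 0" using orth_proj_orth[OF assms(1) d] .
  have "(norm (y - v))\<^sup>2 = (norm ((y - ?p) + (?p - v)))\<^sup>2" by simp
  also have "\<dots> = (norm (y - ?p))\<^sup>2 + (norm (?p - v))\<^sup>2"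
    using o norm_add_Pythagorean[of "y - ?p" "?p - v"] by (simp add: orthogonal_def)
  finally have "(norm (y - ?p))\<^sup>2 \<le> (norm (y - v))\<^sup>2" by simp
  then show ?thesis by (simp add: power2_le_iff_abs_le)
qed

lemma subspace_orth_vec: "subspace {w. inner c w = (0::real)}"
  by (auto simp: subspace_def inner_add_right)

lemma orth_proj_basis:
  fixes V :: "'a::euclidean_space set"
  assumes V: "subspace V" and B: "B \<subseteq> V" "pairwise orthogonal B" "\<And>b. b \<in> B \<Longrightarrow> norm b = 1"
    "span B = V" "finite B"
  shows "(norm (orth_proj V y))\<^sup>2 = (\<Sum>b\<in>B. (inner y b)\<^sup>2)"
proof -
  define u where "u = (\<Sum>b\<in>B. inner y b *\<^sub>R b)"
  have uV: "u \<in> V" unfolding u_def using B V by (intro subspace_sum subspace_scale) auto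
  have ob: "inner (y - u) b' = 0" if b': "b' \<in> B" for b'
  proof -
    have "inner u b' = (\<Sum>b\<in>B. inner y b * inner b b')"
      unfolding u_def by (simp add: inner_sum_left)
    also have "\<dots> = (\<Sum>b\<in>{b'}. inner y b * inner b b')"
    proof (rule sum.mono_neutral_right)
      show "\<forall>i\<in>B - {b'}. inner y i * inner i b' = 0"
        using B(2) b' by (auto simp: pairwise_def orthogonal_def)
    qed (use b' B in auto)
    also have "\<dots> = inner y b'" using B(3)[OF b'] by (simp add: inner_commute dot_square_norm)
    finally show ?thesis by (simp add: inner_diff_left)
  qed
  have "span B \<subseteq> {w. inner (y - u) w = 0}"
    by (rule span_minimal) (use ob subspace_orth_vec in auto)
  then have eq: "orth_proj V y = u"
    by (intro orth_proj_eqI[OF V uV]) (use B(4) in auto)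
  have "(norm u)\<^sup>2 = inner u u" by (simp add: dot_square_norm)
  also have "\<dots> = inner y u"
  proof -
    have "inner (y - u) u = 0" using orth_proj_orth[OF V uV, of y] eq by simp
    then show ?thesis by (simp add: inner_diff_left)
  qed
  also have "\<dots> = (\<Sum>b\<in>B. (inner y b)\<^sup>2)"
    unfolding u_def by (simp add: inner_sum_right power2_eq_square)
  finally show ?thesis using eq by simp
qed

lemma trace_tight:
  fixes Phi :: "real^'d^'k" and V :: "(real^'d) set"
  assumes T: "unit_norm_tight_frame Phi" and V: "subspace V"
  shows "(\<Sum>i\<in>UNIV. (norm (orth_proj V (Phi $ i)))\<^sup>2) = (real CARD('k) / real CARD('d)) * real (dim V)"
proof -
  obtain B where B: "B \<subseteq> V" "pairwise orthogonal B" "\<And>x. x \<in> B \<Longrightarrow> norm x = 1"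
    "independent B" "card B = dim V" "span B = V"
    using orthonormal_basis_subspace[OF V] by blast
  have fB: "finite B" using B(4) finiteI_independent by blast
  have "(\<Sum>i\<in>UNIV. (norm (orth_proj V (Phi $ i)))\<^sup>2) = (\<Sum>i\<in>UNIV. \<Sum>b\<in>B. (inner (Phi $ i) b)\<^sup>2)"
    using orth_proj_basis[OF V B(1,2,3,6) fB] by simp
  also have "\<dots> = (\<Sum>b\<in>B. \<Sum>i\<in>UNIV. (inner (Phi $ i) b)\<^sup>2)" by (rule sum.swap)
  also have "\<dots> = (\<Sum>b\<in>B. (real CARD('k) / real CARD('d)))"
    using T B(3) unfolding unit_norm_tight_frame_def by simp
  also have "\<dots> = (real CARD('k) / real CARD('d)) * real (dim V)" using B(5) by simp
  finally show ?thesis .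
qed

definition supp_in :: "'k set \<Rightarrow> real^'k \<Rightarrow> bool" where
  "supp_in I b \<longleftrightarrow> (\<forall>i. i \<notin> I \<longrightarrow> b $ i = 0)"

definition l1 :: "real^'k \<Rightarrow> real" where
  "l1 b = (\<Sum>i\<in>UNIV. \<bar>b $ i\<bar>)"

definition cindep :: "real^'d^'k \<Rightarrow> 'k set \<Rightarrow> bool" where
  "cindep Phi I \<longleftrightarrow> (\<forall>b. supp_in I b \<and> synth Phi b = 0 \<longrightarrow> b = 0)"

lemma synth_linear: "linear (synth Psi)"
  unfolding synth_def by (rule linearI) (auto simp: sum.distrib scaleR_add_left scaleR_sum_right)

lemma synth_bounded_linear: "bounded_linear (synth (Psi::real^'d^'k))"
  using synth_linear linear_conv_bounded_linear by blast

lemma synth_in_span: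
  assumes "supp_in I b"
  shows "synth Psi b \<in> span ((\<lambda>i. Psi $ i) ` I)"
proof -
  have "synth Psi b = (\<Sum>i\<in>UNIV. b $ i *\<^sub>R Psi $ i)" by (simp add: synth_def)
  also have "\<dots> \<in> span ((\<lambda>i. Psi $ i) ` I)"
    apply (rule span_sum)
    using assms unfolding supp_in_def
    by (metis image_eqI scaleR_zero_left span_base span_scale span_zero)
  finally show ?thesis .
qed

lemma span_repr:
  fixes Psi :: "real^'d^'k"
  assumes "y \<in> span ((\<lambda>i. Psi $ i) ` I)"
  shows "\<exists>b. supp_in I b \<and> y = synth Psi b"
proof -
  let ?W = "{synth Psi b | b. supp_in I b}"
  have sub: "subspace ?W"
  proof (unfold subspace_def, intro conjI ballI allI)
    show "0 \<in> ?W" by (rule CollectI, rule exI[of _ 0]) (auto simp: supp_in_def synth_def)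
  next
    fix x y assume "x \<in> ?W" "y \<in> ?W"
    then obtain b1 b2 where "x = synth Psi b1" "supp_in I b1" "y = synth Psi b2" "supp_in I b2" by blast
    then show "x + y \<in> ?W"
      by (intro CollectI exI[of _ "b1 + b2"]) (auto simp: supp_in_def linear_add[OF synth_linear])
  next
    fix c x assume "x \<in> ?W"
    then obtain b1 where "x = synth Psi b1" "supp_in I b1" by blast
    then show "c *\<^sub>R x \<in> ?W"
      by (intro CollectI exI[of _ "c *\<^sub>R b1"]) (auto simp: supp_in_def linear_scale[OF synth_linear])
  qed
  have base: "(\<lambda>i. Psi $ i) ` I \<subseteq> ?W"
  proof
    fix v assume "v \<in> (\<lambda>i. Psi $ i) ` I"
    then obtain i where i: "i \<in> I" "v = Psi $ i" by blast
    have "synth Psi (axis i 1) = Psi $ i"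
    proof -
      have "synth Psi (axis i 1) = (\<Sum>j\<in>UNIV. (if j = i then Psi $ i else 0))"
        unfolding synth_def by (intro sum.cong) (auto simp: axis_def)
      then show ?thesis by simp
    qed
    then show "v \<in> ?W" using i by (auto simp: supp_in_def axis_def intro!: exI[of _ "axis i 1"])
  qed
  have "span ((\<lambda>i. Psi $ i) ` I) \<subseteq> ?W" by (rule span_minimal[OF base sub])
  then show ?thesis using assms by blast
qed

lemma norm_synth_diff:
  fixes Psi Phi :: "real^'d^'k"
  shows "norm (synth Psi b - synth Phi b) \<le> dist Psi Phi * l1 b"
proof -
  have "synth Psi b - synth Phi b = (\<Sum>i\<in>UNIV. b $ i *\<^sub>R (Psi $ i - Phi $ i))"
    by (simp add: synth_def sum_subtractf scaleR_diff_right)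
  also have "norm \<dots> \<le> (\<Sum>i\<in>UNIV. \<bar>b $ i\<bar> * norm (Psi $ i - Phi $ i))"
    by (rule order_trans[OF norm_sum]) simp
  also have "\<dots> \<le> (\<Sum>i\<in>UNIV. \<bar>b $ i\<bar> * dist Psi Phi)"
    apply (rule sum_mono, rule mult_left_mono)
    using Finite_Cartesian_Product.norm_nth_le[of "Psi - Phi"] by (auto simp: dist_norm)
  also have "\<dots> = dist Psi Phi * l1 b" by (simp add: l1_def sum_distrib_left mult.commute)
  finally show ?thesis .
qed

lemma l1_le: "l1 (b::real^'k) \<le> real CARD('k) * norm b"
proof -
  have "l1 b \<le> (\<Sum>i\<in>(UNIV::'k set). norm b)"
    unfolding l1_def by (rule sum_mono) (simp add: component_le_norm_cart)
  then show ?thesis by simp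
qed

lemma closed_supp_in: "closed {b::real^'k. supp_in I b}"
proof -
  have "{b::real^'k. supp_in I b} = (\<Inter>i\<in>-I. {b. b $ i = 0})" by (auto simp: supp_in_def)
  moreover have "closed {b::real^'k. b $ i = 0}" for i
    by (rule closed_Collect_eq) (auto intro: continuous_intros)
  ultimately show ?thesis by auto
qed

lemma subspace_supp_in: "subspace {b::real^'k. supp_in I b}"
  by (auto simp: subspace_def supp_in_def)

lemma cindep_lower:
  fixes Phi :: "real^'d^'k"
  assumes "cindep Phi I"
  shows "\<exists>c>0. \<forall>b. supp_in I b \<longrightarrow> c * l1 b \<le> norm (synth Phi b)"
proof -
  obtain e where e: "e > 0" "\<forall>x\<in>{b. supp_in I b}. norm (synth Phi x) \<ge> e * norm x"
    using injective_imp_isometric[OF closed_supp_in subspace_supp_in synth_bounded_linear] assms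
    unfolding cindep_def by blast
  show ?thesis
  proof (intro exI[of _ "e / real CARD('k)"] conjI allI impI)
    show "e / real CARD('k) > 0" using e by simp
    fix b assume "supp_in I b"
    then have "e * norm b \<le> norm (synth Phi b)" using e by auto
    moreover have "e / real CARD('k) * l1 b \<le> e * norm b"
      using l1_le[of b] e by (simp add: field_simps)
    ultimately show "e / real CARD('k) * l1 b \<le> norm (synth Phi b)" by linarith
  qed
qed

lemma proj_perturb:
  fixes A C :: "real^'d^'k" and y :: "real^'d"
  assumes c: "c > 0" and low: "\<And>b. supp_in I b \<Longrightarrow> c * l1 b \<le> norm (synth A b)"
    and eta: "eta = dist A C * norm y / c"
  shows "(norm (orth_proj (span ((\<lambda>i. C $ i) ` I)) y))\<^sup>2 \<ge>
         (norm (orth_proj (span ((\<lambda>i. A $ i) ` I)) y))\<^sup>2 - (2 * norm y * eta + eta\<^sup>2)"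
proof -
  let ?VA = "span ((\<lambda>i. A $ i) ` I)" and ?VC = "span ((\<lambda>i. C $ i) ` I)"
  let ?u = "orth_proj ?VA y"
  have sA: "subspace ?VA" and sC: "subspace ?VC" by auto
  obtain b where b: "supp_in I b" "?u = synth A b"
    using span_repr orth_proj_in[OF sA] by blast
  have "c * l1 b \<le> norm ?u" using low[OF b(1)] b(2) by simp
  also have "\<dots> \<le> norm y" by (rule orth_proj_norm_le[OF sA])
  finally have l1b: "l1 b \<le> norm y / c" using c by (simp add: field_simps)
  have l1nn: "l1 b \<ge> 0" unfolding l1_def by (simp add: sum_nonneg)
  define z where "z = synth C b"
  have zC: "z \<in> ?VC" unfolding z_def by (rule synth_in_span[OF b(1)])
  have uz: "norm (?u - z) \<le> eta"
  proof -
    have "norm (?u - z) \<le> dist A C * l1 b" using norm_synth_diff[of A b C] b(2) z_def by simp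
    also have "\<dots> \<le> dist A C * (norm y / c)" by (rule mult_left_mono[OF l1b]) simp
    finally show ?thesis using eta by simp
  qed
  have etann: "eta \<ge> 0" using eta c by simp
  define r where "r = norm (y - ?u)"
  have rnn: "r \<ge> 0" and rle: "r \<le> norm y"
    using orth_proj_pyth[OF sA, of y] unfolding r_def
    by (auto simp: power2_le_iff_abs_le[symmetric]) (smt (verit) zero_le_power2 abs_of_nonneg norm_ge_zero power2_le_iff_abs_le)
  have "norm (y - orth_proj ?VC y) \<le> norm (y - z)" by (rule orth_proj_min[OF sC zC])
  also have "\<dots> \<le> r + eta" unfolding r_def using uz norm_triangle_ineq[of "y - ?u" "?u - z"] by simp
  finally have d: "norm (y - orth_proj ?VC y) \<le> r + eta" .
  have "(norm (y - orth_proj ?VC y))\<^sup>2 \<le> (r + eta)\<^sup>2"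
    using d by (simp add: power_mono)
  moreover have "(norm y)\<^sup>2 = (norm ?u)\<^sup>2 + r\<^sup>2" using orth_proj_pyth[OF sA, of y] r_def by simp
  moreover have "(norm y)\<^sup>2 = (norm (orth_proj ?VC y))\<^sup>2 + (norm (y - orth_proj ?VC y))\<^sup>2"
    by (rule orth_proj_pyth[OF sC])
  moreover have "r * eta \<le> norm y * eta" using rle etann by (simp add: mult_right_mono)
  ultimately show ?thesis by (simp add: power2_eq_square algebra_simps)
qed

lemma crearr_len: "length (rev (sorted_list_of_multiset (image_mset (\<lambda>i. \<bar>(x::real^'k) $ i\<bar>) (mset_set (UNIV::'k set))))) = CARD('k)"
  by (metis length_rev mset_sorted_list_of_multiset size_image_mset size_mset size_mset_set)

lemma crearr_mono:
  fixes x :: "real^'k"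
  assumes "j \<le> j'" "j' < CARD('k)"
  shows "crearr x j' \<le> crearr x j"
proof -
  let ?s = "sorted_list_of_multiset (image_mset (\<lambda>i. \<bar>x $ i\<bar>) (mset_set (UNIV::'k set)))"
  have len: "length ?s = CARD('k)" using crearr_len[of x] by simp
  have "?s ! (length ?s - Suc j') \<le> ?s ! (length ?s - Suc j)"
    by (rule sorted_nth_mono) (use assms len in auto)
  then show ?thesis unfolding crearr_def using assms len by (simp add: rev_nth)
qed

lemma crearr_sort:
  fixes x :: "real^'k"
  shows "\<exists>p\<in>perms. \<forall>i. crearr x (p i) = \<bar>x $ i\<bar>"
proof -
  let ?g = "\<lambda>i. \<bar>x $ i\<bar>"
  let ?M = "image_mset ?g (mset_set (UNIV::'k set))"
  define L where "L = rev (sorted_list_of_multiset ?M)"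
  have lenL: "length L = CARD('k)" unfolding L_def by (rule crearr_len)
  obtain e where e: "bij_betw e {0..<CARD('k)} (UNIV::'k set)"
    using ex_bij_betw_nat_finite[of "UNIV::'k set"] by auto
  define xs where "xs = map (\<lambda>n. ?g (e n)) [0..<CARD('k)]"
  have "mset xs = image_mset ?g (image_mset e (mset_set {0..<CARD('k)}))"
    unfolding xs_def by (simp add: image_mset.compositionality o_def)
  also have "image_mset e (mset_set {0..<CARD('k)}) = mset_set (UNIV::'k set)"
    using e by (simp add: image_mset_mset_set bij_betw_def)
  finally have "mset L = mset xs" unfolding L_def by simp
  then obtain \<pi> where pi: "\<pi> permutes {..<length xs}" "permute_list \<pi> xs = L"
    by (rule mset_eq_permutation)
  have lenxs: "length xs = CARD('k)" unfolding xs_def by simp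
  have Lnth: "L ! j = ?g (e (\<pi> j))" if "j < CARD('k)" for j
  proof -
    have "L ! j = xs ! \<pi> j" using pi permute_list_nth[OF pi(1)] that lenxs by auto
    moreover have "\<pi> j < CARD('k)" using permutes_in_image[OF pi(1)] that lenxs by auto
    ultimately show ?thesis unfolding xs_def by simp
  qed
  have bpi: "bij_betw \<pi> {0..<CARD('k)} {0..<CARD('k)}"
    using permutes_imp_bij[OF pi(1)] lenxs by (simp add: lessThan_atLeast0)
  define p where "p = (\<lambda>i. inv_into {0..<CARD('k)} \<pi> (inv_into {0..<CARD('k)} e i))"
  have bp: "bij_betw p UNIV {0..<CARD('k)}"
    unfolding p_def using bij_betw_trans[OF bij_betw_inv_into[OF e] bij_betw_inv_into[OF bpi]]
    by (simp add: o_def)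
  show ?thesis
  proof (intro bexI[of _ p] allI)
    show "p \<in> perms" using bp by (simp add: perms_def)
    fix i
    have pi_lt: "p i < CARD('k)" using bp by (auto simp: bij_betw_def)
    have "e (\<pi> (p i)) = i"
    proof -
      have "inv_into {0..<CARD('k)} e i \<in> {0..<CARD('k)}"
        using bij_betw_inv_into[OF e] by (auto simp: bij_betw_def)
      then have "\<pi> (p i) = inv_into {0..<CARD('k)} e i"
        unfolding p_def using bpi by (simp add: bij_betw_inv_into_right)
      then show ?thesis using e by (simp add: bij_betw_inv_into_right)
    qed
    then show "crearr x (p i) = \<bar>x $ i\<bar>"
      using Lnth[OF pi_lt] unfolding crearr_def L_def[symmetric] by simp
  qed
qed

definition Ip :: "nat \<Rightarrow> ('k \<Rightarrow> nat) \<Rightarrow> 'k set" where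
  "Ip S p = {i. p i < S}"

definition marginOK :: "real^'d^'k \<Rightarrow> nat \<Rightarrow> real \<Rightarrow> real^'k \<Rightarrow> bool" where
  "marginOK Phi S \<kappa> x \<longleftrightarrow> (\<forall>p\<in>perms. \<forall>\<sigma>\<in>signs. \<forall>I. card I \<le> S \<and> I \<noteq> Ip S p \<longrightarrow>
     norm (P I Phi (synth Phi (cps p \<sigma> x))) + 2 * \<kappa> \<le> norm (P (Ip S p) Phi (synth Phi (cps p \<sigma> x))))"

lemma finite_perms: "finite (perms :: ('k::finite \<Rightarrow> nat) set)"
proof -
  have "perms \<subseteq> (\<Pi>\<^sub>E i\<in>(UNIV::'k set). {0..<CARD('k)})"
    by (auto simp: perms_def PiE_UNIV_domain bij_betw_def)
  moreover have "finite (\<Pi>\<^sub>E i\<in>(UNIV::'k set). {0..<CARD('k)})" by (rule finite_PiE) auto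
  ultimately show ?thesis by (rule finite_subset)
qed

lemma finite_signs: "finite (signs :: ('k::finite \<Rightarrow> real) set)"
proof -
  have "signs \<subseteq> (\<Pi>\<^sub>E i\<in>(UNIV::'k set). {-1, 1::real})"
    by (auto simp: signs_def PiE_UNIV_domain)
  moreover have "finite (\<Pi>\<^sub>E i\<in>(UNIV::'k set). {-1, 1::real})" by (rule finite_PiE) auto
  ultimately show ?thesis by (rule finite_subset)
qed

lemma card_Ip:
  assumes "p \<in> perms" "S \<le> CARD('k)"
  shows "card (Ip S (p :: 'k::finite \<Rightarrow> nat)) = S"
proof -
  have b: "bij_betw p UNIV {0..<CARD('k)}" using assms by (simp add: perms_def)
  have "p ` Ip S p = {0..<S}"
  proof
    show "p ` Ip S p \<subseteq> {0..<S}" by (auto simp: Ip_def)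
    show "{0..<S} \<subseteq> p ` Ip S p"
    proof
      fix n assume "n \<in> {0..<S}"
      then have "n \<in> p ` UNIV" using b assms(2) by (auto simp: bij_betw_def)
      then show "n \<in> p ` Ip S p" using \<open>n \<in> {0..<S}\<close> by (auto simp: Ip_def)
    qed
  qed
  moreover have "inj_on p (Ip S p)" using b by (auto simp: bij_betw_def inj_on_def)
  ultimately show ?thesis by (metis card_atLeastLessThan card_image diff_zero)
qed

lemma G_marginOK:
  fixes Phi :: "real^'d^'k"
  assumes "1 \<le> S" "S \<le> CARD('k)"
    and "Min ((\<lambda>(p, \<sigma>).
               norm (P {i. p i < S} Phi (synth Phi (cps p \<sigma> x)))
             - Max ((\<lambda>I. norm (P I Phi (synth Phi (cps p \<sigma> x))))
                      ` {I. card I \<le> S \<and> I \<noteq> {i. p i < S}}))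
             ` (perms \<times> signs)) \<ge> 2 * \<kappa>" (is "Min (?f ` _) \<ge> _")
  shows "marginOK Phi S \<kappa> x"
  unfolding marginOK_def
proof (intro ballI allI impI)
  fix p :: "'k \<Rightarrow> nat" and \<sigma> :: "'k \<Rightarrow> real" and I :: "'k set" assume p: "p \<in> perms" and s: "\<sigma> \<in> signs" and I: "card I \<le> S \<and> I \<noteq> Ip S p"
  let ?y = "synth Phi (cps p \<sigma> x)"
  have fin: "finite (perms \<times> (signs :: ('k \<Rightarrow> real) set))" using finite_perms finite_signs by auto
  have "2 * \<kappa> \<le> ?f (p, \<sigma>)"
    using assms(3) Min_le[OF finite_imageI[OF fin], of "?f (p, \<sigma>)"] p s by fastforce
  moreover have "norm (P I Phi ?y) \<le> Max ((\<lambda>I. norm (P I Phi ?y)) ` {I. card I \<le> S \<and> I \<noteq> {i. p i < S}})"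
    by (rule Max_ge) (use I in \<open>auto simp: Ip_def\<close>)
  ultimately show "norm (P I Phi ?y) + 2 * \<kappa> \<le> norm (P (Ip S p) Phi ?y)"
    by (simp add: Ip_def)
qed

definition sw :: "'k \<Rightarrow> 'k \<Rightarrow> 'k \<Rightarrow> 'k" where
  "sw a b l = (if l = a then b else if l = b then a else l)"

lemma sw_inv: "sw a b (sw a b l) = l" by (auto simp: sw_def)

lemma bij_sw: "bij (sw a b)"
  by (metis bijI' sw_inv)

lemma sort_signs:
  fixes x :: "real^'k"
  assumes "p \<in> perms" "\<forall>i. crearr x (p i) = \<bar>x $ i\<bar>"
  shows "cps p (\<lambda>i. if x $ i \<ge> 0 then 1 else -1) x = x" "(\<lambda>i. if x $ i \<ge> 0 then 1 else -1) \<in> signs"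
  using assms by (auto simp: cps_def signs_def vec_eq_iff)

lemma no_tie:
  fixes Phi :: "real^'d^'k" and x :: "real^'k"
  assumes mo: "marginOK Phi S \<kappa> x" and k: "\<kappa> > 0" and SK: "S \<le> CARD('k)"
    and p: "p \<in> perms" "\<forall>i. crearr x (p i) = \<bar>x $ i\<bar>"
    and ij: "p i < S" "\<not> p j < S"
  shows "\<bar>x $ j\<bar> < \<bar>x $ i\<bar>"
proof -
  have pj: "p j < CARD('k)" using p by (auto simp: perms_def bij_betw_def)
  have ge: "\<bar>x $ j\<bar> \<le> \<bar>x $ i\<bar>" using crearr_mono[of "p i" "p j" x] p ij pj by simp
  show ?thesis
  proof (rule ccontr)
    assume "\<not> ?thesis"
    then have eq: "\<bar>x $ j\<bar> = \<bar>x $ i\<bar>" using ge by simp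
    define p' where "p' = p \<circ> sw i j"
    have p'perm: "p' \<in> perms"
      using p(1) bij_betw_trans[OF bij_sw[of i j], of p "{0..<CARD('k)}"] unfolding perms_def p'_def
      by simp
    have p'sort: "\<forall>l. crearr x (p' l) = \<bar>x $ l\<bar>"
    proof
      fix l
      have "\<bar>x $ sw i j l\<bar> = \<bar>x $ l\<bar>" using eq by (simp add: sw_def)
      then show "crearr x (p' l) = \<bar>x $ l\<bar>" using p(2) by (simp add: p'_def)
    qed
    define \<sigma> where "\<sigma> = (\<lambda>i. if x $ i \<ge> 0 then (1::real) else -1)"
    have c1: "cps p \<sigma> x = x" and c2: "cps p' \<sigma> x = x" and s: "\<sigma> \<in> signs"
      using sort_signs[OF p] sort_signs[OF p'perm p'sort] unfolding \<sigma>_def by auto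
    have ne: "Ip S p' \<noteq> Ip S p"
    proof -
      have "j \<in> Ip S p'" using ij by (auto simp: Ip_def p'_def sw_def)
      moreover have "j \<notin> Ip S p" using ij by (auto simp: Ip_def)
      ultimately show ?thesis by blast
    qed
    have A: "\<And>q I. q \<in> perms \<Longrightarrow> card I \<le> S \<Longrightarrow> I \<noteq> Ip S q \<Longrightarrow>
      norm (P I Phi (synth Phi (cps q \<sigma> x))) + 2 * \<kappa> \<le> norm (P (Ip S q) Phi (synth Phi (cps q \<sigma> x)))"
      using mo s unfolding marginOK_def by blast
    have "norm (P (Ip S p') Phi (synth Phi x)) + 2 * \<kappa> \<le> norm (P (Ip S p) Phi (synth Phi x))"
      using A[OF p(1), of "Ip S p'"] ne card_Ip[OF p'perm SK] c1 by simp
    moreover have "norm (P (Ip S p) Phi (synth Phi x)) + 2 * \<kappa> \<le> norm (P (Ip S p') Phi (synth Phi x))"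
      using A[OF p'perm, of "Ip S p"] ne card_Ip[OF p(1) SK] c2 by simp
    ultimately show False using k by simp
  qed
qed

definition Eset :: "'k set \<Rightarrow> (real^'k) set" where
  "Eset I = {x. norm x = 1 \<and> (\<forall>i\<in>I. \<forall>j. j \<notin> I \<longrightarrow> \<bar>x $ j\<bar> < \<bar>x $ i\<bar>)}"

lemma Eset_unique:
  fixes I J :: "'k::finite set"
  assumes "card I = card J" "x \<in> Eset I" "x \<in> Eset J"
  shows "I = J"
proof (rule ccontr)
  assume ne: "I \<noteq> J"
  have "\<not> I \<subseteq> J" using assms(1) ne card_subset_eq[of J I] by auto
  then obtain i where i: "i \<in> I" "i \<notin> J" by blast
  have "\<not> J \<subseteq> I" using assms(1) ne card_subset_eq[of I J] by auto
  then obtain j where j: "j \<in> J" "j \<notin> I" by blast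
  show False using assms(2,3) i j by (force simp: Eset_def)
qed

lemma marginOK_T:
  fixes Phi :: "real^'d^'k" and x :: "real^'k"
  assumes mo: "marginOK Phi S \<kappa> x" and k: "\<kappa> > 0" and SK: "S \<le> CARD('k)" and nx: "norm x = 1"
  shows "\<exists>J. card J = S \<and> x \<in> Eset J \<and> (\<forall>I. card I \<le> S \<and> I \<noteq> J \<longrightarrow>
     norm (P I Phi (synth Phi x)) + 2 * \<kappa> \<le> norm (P J Phi (synth Phi x)))"
proof -
  obtain p where p: "p \<in> perms" "\<forall>i. crearr x (p i) = \<bar>x $ i\<bar>" using crearr_sort by blast
  define \<sigma> where "\<sigma> = (\<lambda>i. if x $ i \<ge> 0 then (1::real) else -1)"
  have c1: "cps p \<sigma> x = x" and s: "\<sigma> \<in> signs" using sort_signs[OF p] unfolding \<sigma>_def by auto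
  show ?thesis
  proof (intro exI[of _ "Ip S p"] conjI allI impI)
    show "card (Ip S p) = S" by (rule card_Ip[OF p(1) SK])
    show "x \<in> Eset (Ip S p)"
      using no_tie[OF mo k SK p] nx by (auto simp: Eset_def Ip_def)
    fix I assume "card I \<le> S \<and> I \<noteq> Ip S p"
    then show "norm (P I Phi (synth Phi x)) + 2 * \<kappa> \<le> norm (P (Ip S p) Phi (synth Phi x))"
      using mo p(1) s c1 unfolding marginOK_def by metis
  qed
qed

lemma perm_for:
  assumes SK: "S \<le> CARD('k::finite)" and J: "card (J::'k set) = S"
  shows "\<exists>p\<in>perms. Ip S p = J"
proof -
  define z where "z = (\<chi> i. if i \<in> J then (1::real) else 0)"
  obtain p where p: "p \<in> perms" "\<forall>i. crearr z (p i) = \<bar>z $ i\<bar>" using crearr_sort by blast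
  have cA: "card (Ip S p) = S" by (rule card_Ip[OF p(1) SK])
  show ?thesis
  proof (rule bexI[OF _ p(1)], rule ccontr)
    assume ne: "Ip S p \<noteq> J"
    have "\<not> Ip S p \<subseteq> J" using cA J ne card_subset_eq[of J "Ip S p"] by auto
    then obtain i where i: "i \<in> Ip S p" "i \<notin> J" by blast
    have "\<not> J \<subseteq> Ip S p" using cA J ne card_subset_eq[of "Ip S p" J] by auto
    then obtain j where j: "j \<in> J" "j \<notin> Ip S p" by blast
    have pj: "p j < CARD('k)" using p by (auto simp: perms_def bij_betw_def)
    have "crearr z (p j) \<le> crearr z (p i)"
      by (rule crearr_mono) (use i j pj in \<open>auto simp: Ip_def\<close>)
    then show False using p(2) i j by (simp add: z_def)
  qed
qed

lemma synth_axis: "synth Psi (axis i 1) = Psi $ i"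
proof -
  have "synth Psi (axis i 1) = (\<Sum>j\<in>UNIV. (if j = i then Psi $ i else 0))"
    unfolding synth_def by (intro sum.cong) (auto simp: axis_def)
  then show ?thesis by simp
qed

lemma cindep_card:
  fixes Phi :: "real^'d^'k" and x :: "real^'k"
  assumes mo: "marginOK Phi S \<kappa> x" and k: "\<kappa> > 0" and SK: "S \<le> CARD('k)"
    and J: "card J = S"
  shows "cindep Phi J"
  unfolding cindep_def
proof (intro allI impI, rule ccontr)
  fix b assume b: "supp_in J b \<and> synth Phi b = 0" and nz: "b \<noteq> 0"
  obtain i where bi: "b $ i \<noteq> 0" using nz by (auto simp: vec_eq_iff)
  have iJ: "i \<in> J" using b bi by (auto simp: supp_in_def)
  define b2 where "b2 = (- (1 / b $ i)) *\<^sub>R (b - (b $ i) *\<^sub>R axis i 1)"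
  have s2: "supp_in (J - {i}) b2" using b by (auto simp: b2_def supp_in_def axis_def)
  have "synth Phi b2 = (- (1 / b $ i)) *\<^sub>R (synth Phi b - (b $ i) *\<^sub>R synth Phi (axis i 1))"
    unfolding b2_def by (simp add: linear_scale[OF synth_linear] linear_diff[OF synth_linear] linear_neg[OF synth_linear])
  also have "\<dots> = Phi $ i" using b bi by (simp add: synth_axis)
  finally have "Phi $ i \<in> span ((\<lambda>l. Phi $ l) ` (J - {i}))"
    using synth_in_span[OF s2, of Phi] by simp
  then have "span (insert (Phi $ i) ((\<lambda>l. Phi $ l) ` (J - {i}))) = span ((\<lambda>l. Phi $ l) ` (J - {i}))"
    by (rule span_redundant)
  moreover have "insert (Phi $ i) ((\<lambda>l. Phi $ l) ` (J - {i})) = (\<lambda>l. Phi $ l) ` J" using iJ by auto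
  ultimately have PP: "\<And>y. P J Phi y = P (J - {i}) Phi y" by (simp add: P_def)
  obtain p where p: "p \<in> perms" "Ip S p = J" using perm_for[OF SK J] by blast
  have s: "(\<lambda>_. 1::real) \<in> signs" by (simp add: signs_def)
  have c: "card (J - {i}) \<le> S" using J iJ by (metis card_Diff1_le finite)
  have ne: "J - {i} \<noteq> Ip S p" using p(2) iJ by auto
  have "norm (P (J - {i}) Phi (synth Phi (cps p (\<lambda>_. 1) x))) + 2 * \<kappa>
       \<le> norm (P (Ip S p) Phi (synth Phi (cps p (\<lambda>_. 1) x)))"
    using mo p(1) s c ne unfolding marginOK_def by blast
  then show False using PP p(2) k by simp
qed

lemma cindep_all:
  fixes Phi :: "real^'d^'k" and x :: "real^'k"
  assumes mo: "marginOK Phi S \<kappa> x" and k: "\<kappa> > 0" and SK: "S \<le> CARD('k)"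
    and I: "card I \<le> S"
  shows "cindep Phi I"
proof -
  have "S - card I \<le> card (- I)" using SK I by (simp add: Compl_eq_Diff_UNIV card_Diff_subset)
  then obtain T where T: "T \<subseteq> - I" "card T = S - card I" "finite T"
    by (rule obtain_subset_with_card_n)
  have "card (I \<union> T) = S" using T I by (subst card_Un_disjoint) auto
  then have "cindep Phi (I \<union> T)" by (rule cindep_card[OF mo k SK])
  then show ?thesis unfolding cindep_def supp_in_def by blast
qed

lemma uniform_lower:
  fixes Phi :: "real^'d^'k"
  assumes "\<forall>I. card I \<le> S \<longrightarrow> cindep Phi I"
  shows "\<exists>c>0. \<forall>I b. card I \<le> S \<longrightarrow> supp_in I b \<longrightarrow> c * l1 b \<le> norm (synth Phi b)"
proof -
  let ?J = "{I::'k set. card I \<le> S}"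
  have "\<forall>I\<in>?J. \<exists>c>0. \<forall>b. supp_in I b \<longrightarrow> c * l1 b \<le> norm (synth Phi b)"
    using assms cindep_lower by blast
  then obtain cf where cf: "\<And>I. I \<in> ?J \<Longrightarrow> cf I > 0 \<and> (\<forall>b. supp_in I b \<longrightarrow> cf I * l1 b \<le> norm (synth Phi b))"
    by metis
  have fin: "finite (cf ` ?J)" by simp
  have ne: "cf ` ?J \<noteq> {}" by (simp, rule exI[of _ "{}"], simp)
  define c where "c = Min (cf ` ?J)"
  have cpos: "c > 0" unfolding c_def using fin ne cf by (subst Min_gr_iff) auto
  show ?thesis
  proof (intro exI[of _ c] conjI allI impI cpos)
    fix I :: "'k set" and b :: "real^'k" assume I: "card I \<le> S" and b: "supp_in I b"
    have "c \<le> cf I" unfolding c_def using I by (intro Min_le) auto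
    moreover have "l1 b \<ge> 0" unfolding l1_def by (simp add: sum_nonneg)
    ultimately have "c * l1 b \<le> cf I * l1 b" by (simp add: mult_right_mono)
    also have "\<dots> \<le> norm (synth Phi b)" using cf[of I] I b by auto
    finally show "c * l1 b \<le> norm (synth Phi b)" .
  qed
qed

lemma perturb_sq:
  fixes Phi Psi :: "real^'d^'k" and y :: "real^'d"
  assumes c: "c > 0" and low: "\<And>b. supp_in I b \<Longrightarrow> c * l1 b \<le> norm (synth Phi b)"
    and d: "dist Psi Phi \<le> c / 2" and y: "norm y \<le> B"
    and eta: "eta = dist Psi Phi * B / (c / 2)"
  shows "(norm (P I Psi y))\<^sup>2 \<ge> (norm (P I Phi y))\<^sup>2 - (2 * B * eta + eta\<^sup>2)"
    and "(norm (P I Phi y))\<^sup>2 \<ge> (norm (P I Psi y))\<^sup>2 - (2 * B * eta + eta\<^sup>2)"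
proof -
  have c2: "c / 2 > 0" using c by simp
  have l1nn: "\<And>b. l1 b \<ge> 0" unfolding l1_def by (simp add: sum_nonneg)
  have lowPhi: "c / 2 * l1 b \<le> norm (synth Phi b)" if "supp_in I b" for b
  proof -
    have "c / 2 * l1 b \<le> c * l1 b" using l1nn[of b] c by (simp add: mult_right_mono)
    then show ?thesis using low[OF that] by linarith
  qed
  have lowPsi: "c / 2 * l1 b \<le> norm (synth Psi b)" if "supp_in I b" for b
  proof -
    have "norm (synth Phi b) \<le> norm (synth Psi b) + norm (synth Psi b - synth Phi b)"
      by (metis norm_triangle_sub add.commute norm_minus_commute)
    moreover have "norm (synth Psi b - synth Phi b) \<le> dist Psi Phi * l1 b" by (rule norm_synth_diff)
    moreover have "dist Psi Phi * l1 b \<le> c / 2 * l1 b" by (rule mult_right_mono[OF d l1nn])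
    ultimately show ?thesis using low[OF that] by linarith
  qed
  define e1 where "e1 = dist Psi Phi * norm y / (c / 2)"
  have e1nn: "e1 \<ge> 0" unfolding e1_def using c by simp
  have e1le: "e1 \<le> eta" unfolding e1_def eta using y c
    by (simp add: divide_right_mono mult_left_mono)
  have ny: "norm y \<ge> 0" by simp
  have mono: "2 * norm y * e1 + e1\<^sup>2 \<le> 2 * B * eta + eta\<^sup>2"
  proof -
    have "norm y * e1 \<le> B * eta" by (rule mult_mono[OF y e1le]) (use y ny e1nn in linarith)+
    moreover have "e1\<^sup>2 \<le> eta\<^sup>2" using e1le e1nn by (simp add: power_mono)
    ultimately show ?thesis by simp
  qed
  have e1': "e1 = dist Phi Psi * norm y / (c / 2)" unfolding e1_def by (simp add: dist_commute)
  have "(norm (orth_proj (span ((\<lambda>i. Psi $ i) ` I)) y))\<^sup>2 \<ge>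
         (norm (orth_proj (span ((\<lambda>i. Phi $ i) ` I)) y))\<^sup>2 - (2 * norm y * e1 + e1\<^sup>2)"
    using proj_perturb[OF c2 lowPhi e1'] by simp
  then show "(norm (P I Psi y))\<^sup>2 \<ge> (norm (P I Phi y))\<^sup>2 - (2 * B * eta + eta\<^sup>2)"
    using mono unfolding P_def by linarith
  have "(norm (orth_proj (span ((\<lambda>i. Phi $ i) ` I)) y))\<^sup>2 \<ge>
         (norm (orth_proj (span ((\<lambda>i. Psi $ i) ` I)) y))\<^sup>2 - (2 * norm y * e1 + e1\<^sup>2)"
    using proj_perturb[OF c2 lowPsi e1_def] by simp
  then show "(norm (P I Phi y))\<^sup>2 \<ge> (norm (P I Psi y))\<^sup>2 - (2 * B * eta + eta\<^sup>2)"
    using mono unfolding P_def by linarith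
qed

lemma norm_synth_le:
  fixes Phi :: "real^'d^'k"
  assumes "\<forall>i. norm (Phi $ i) = 1"
  shows "norm (synth Phi x) \<le> real CARD('k) * norm x"
proof -
  have "norm (synth Phi x) \<le> (\<Sum>i\<in>UNIV. norm (x $ i *\<^sub>R Phi $ i))"
    unfolding synth_def by (rule norm_sum)
  also have "\<dots> = l1 x" using assms by (simp add: l1_def)
  also have "\<dots> \<le> real CARD('k) * norm x" by (rule l1_le)
  finally show ?thesis .
qed

lemma local_Max:
  fixes Phi :: "real^'d^'k"
  assumes indep: "\<forall>I. card I \<le> S \<longrightarrow> cindep Phi I" and k: "\<kappa> > 0"
    and un: "\<forall>i. norm (Phi $ i) = 1"
  shows "\<exists>\<epsilon>>0. \<forall>Psi::real^'d^'k. dist Psi Phi < \<epsilon> \<longrightarrow> (\<forall>x J. norm x = 1 \<longrightarrow> card J \<le> S \<longrightarrow>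
     (\<forall>I. card I \<le> S \<and> I \<noteq> J \<longrightarrow> norm (P I Phi (synth Phi x)) + 2 * \<kappa> \<le> norm (P J Phi (synth Phi x))) \<longrightarrow>
     Max {(norm (P I Psi (synth Phi x)))\<^sup>2 | I. card I \<le> S} = (norm (P J Psi (synth Phi x)))\<^sup>2)"
proof -
  obtain c where c: "c > 0" and low: "\<And>I b. card I \<le> S \<Longrightarrow> supp_in I b \<Longrightarrow> c * l1 b \<le> norm (synth Phi b)"
    using uniform_lower[OF indep] by blast
  define B where "B = real CARD('k)"
  have B: "B > 0" unfolding B_def by simp
  define t where "t = min 1 (\<kappa>\<^sup>2 / (2 * B + 1))"
  have t1: "t > 0" unfolding t_def using k B by simp
  have t2: "t \<le> 1" unfolding t_def by simp
  have t3: "t \<le> \<kappa>\<^sup>2 / (2 * B + 1)" unfolding t_def by simp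
  have "(2 * B + 1) * t \<le> (2 * B + 1) * (\<kappa>\<^sup>2 / (2 * B + 1))"
    using t3 B by (intro mult_left_mono) auto
  then have t: "t > 0" "t \<le> 1" "(2 * B + 1) * t \<le> \<kappa>\<^sup>2" using t1 t2 B by auto
  define \<epsilon> where "\<epsilon> = min (c / 2) (c * t / (2 * B))"
  have ep: "\<epsilon> > 0" unfolding \<epsilon>_def using c t B by simp
  show ?thesis
  proof (intro exI[of _ \<epsilon>] conjI ep allI impI)
    fix Psi :: "real^'d^'k" and x :: "real^'k" and J :: "'k set"
    assume d: "dist Psi Phi < \<epsilon>" and nx: "norm x = 1" and J: "card J \<le> S"
      and mar: "\<forall>I. card I \<le> S \<and> I \<noteq> J \<longrightarrow> norm (P I Phi (synth Phi x)) + 2 * \<kappa> \<le> norm (P J Phi (synth Phi x))"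
    let ?y = "synth Phi x"
    have ny: "norm ?y \<le> B" using norm_synth_le[OF un, of x] nx B_def by simp
    define eta where "eta = dist Psi Phi * B / (c / 2)"
    have d2: "dist Psi Phi \<le> c / 2" using d unfolding \<epsilon>_def by simp
    have etann: "eta \<ge> 0" unfolding eta_def using c B by simp
    have etat: "eta < t"
    proof -
      have "dist Psi Phi < c * t / (2 * B)" using d unfolding \<epsilon>_def by simp
      then have "dist Psi Phi * (2 * B) < c * t" using B by (simp add: field_simps)
      then show ?thesis unfolding eta_def using c by (simp add: field_simps)
    qed
    define D where "D = 2 * B * eta + eta\<^sup>2"
    have D: "D < \<kappa>\<^sup>2"
    proof -
      have "eta * eta \<le> eta * 1" using etann etat t(2) by (intro mult_left_mono) auto
      then have "eta\<^sup>2 \<le> eta" by (simp add: power2_eq_square)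
      then have "D \<le> (2 * B + 1) * eta" unfolding D_def by (simp add: algebra_simps)
      also have "\<dots> < (2 * B + 1) * t" using etat B by simp
      finally show ?thesis using t(3) by simp
    qed
    have pert: "\<And>I. card I \<le> S \<Longrightarrow> (norm (P I Psi ?y))\<^sup>2 \<ge> (norm (P I Phi ?y))\<^sup>2 - D \<and>
                                      (norm (P I Phi ?y))\<^sup>2 \<ge> (norm (P I Psi ?y))\<^sup>2 - D"
    proof -
      fix I :: "'k set" assume I: "card I \<le> S"
      have lowI: "\<And>b. supp_in I b \<Longrightarrow> c * l1 b \<le> norm (synth Phi b)" using low[OF I] .
      show "?thesis I" using perturb_sq[OF c lowI d2 ny eta_def] unfolding D_def by blast
    qed
    have less: "(norm (P I Psi ?y))\<^sup>2 \<le> (norm (P J Psi ?y))\<^sup>2" if I: "card I \<le> S" for I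
    proof (cases "I = J")
      case False
      have m: "norm (P I Phi ?y) + 2 * \<kappa> \<le> norm (P J Phi ?y)" using mar I False by blast
      have "(norm (P I Phi ?y) + 2 * \<kappa>)\<^sup>2 \<le> (norm (P J Phi ?y))\<^sup>2"
        using m k by (intro power_mono) auto
      moreover have "(norm (P I Phi ?y) + 2 * \<kappa>)\<^sup>2 \<ge> (norm (P I Phi ?y))\<^sup>2 + 4 * \<kappa>\<^sup>2"
        using k by (simp add: power2_eq_square algebra_simps)
      ultimately show ?thesis using pert[OF I] pert[OF J] D by linarith
    qed simp
    have fin: "finite {(norm (P I Psi ?y))\<^sup>2 | I. card I \<le> S}" by simp
    show "Max {(norm (P I Psi ?y))\<^sup>2 | I. card I \<le> S} = (norm (P J Psi ?y))\<^sup>2"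
      by (rule Max_eqI[OF fin]) (use less J in auto)
  qed
qed

lemma sym_basic:
  fixes \<nu> :: "(real^'k) measure"
  assumes "symmetric_measure \<nu>"
  shows "prob_space \<nu>" "sets \<nu> = sets borel" "space \<nu> = UNIV"
    "measurable \<nu> N = measurable borel N"
  using assms unfolding symmetric_measure_def
  by (auto dest: sets_eq_imp_space_eq intro!: measurable_cong_sets)

lemma sym_ae_sphere:
  fixes \<nu> :: "(real^'k) measure"
  assumes "symmetric_measure \<nu>"
  shows "AE x in \<nu>. norm x = 1"
proof -
  have ps: "prob_space \<nu>" using sym_basic[OF assms] by simp
  have "emeasure \<nu> unit_sphere = 1" using assms by (simp add: symmetric_measure_def)
  then have "measure \<nu> unit_sphere = 1" by (simp add: measure_def)
  then have "AE x in \<nu>. x \<in> unit_sphere" by (rule prob_space.AE_prob_1[OF ps])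
  then show ?thesis by (simp add: unit_sphere_def)
qed

lemma sym_ae_G:
  fixes \<nu> :: "(real^'k) measure"
  assumes "symmetric_measure \<nu>" "measure \<nu> {x \<in> space \<nu>. Q x} = 1"
  shows "AE x in \<nu>. Q x"
proof -
  have ps: "prob_space \<nu>" using sym_basic[OF assms(1)] by simp
  have "AE x in \<nu>. x \<in> {x \<in> space \<nu>. Q x}" by (rule prob_space.AE_prob_1[OF ps assms(2)])
  then show ?thesis by auto
qed

lemma sym_invariant:
  fixes \<nu> :: "(real^'k) measure" and f :: "real^'k \<Rightarrow> real"
  assumes sym: "symmetric_measure \<nu>" and s: "\<sigma> \<in> signs" and q: "bij q"
    and f: "f \<in> borel_measurable borel"
  shows "integral\<^sup>L \<nu> f = integral\<^sup>L \<nu> (\<lambda>x. f (\<chi> i. \<sigma> i * x $ q i))"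
proof -
  let ?R = "\<lambda>x::real^'k. \<chi> i. \<sigma> i * x $ q i"
  have eq: "distr \<nu> borel ?R = \<nu>" using sym s q unfolding symmetric_measure_def by blast
  have lin: "linear ?R" by (rule linearI) (auto simp: vec_eq_iff algebra_simps)
  have "continuous_on UNIV ?R" using lin linear_continuous_on linear_conv_bounded_linear by blast
  then have "?R \<in> borel_measurable borel" by (rule borel_measurable_continuous_onI)
  then have Rm: "?R \<in> measurable \<nu> borel" by (simp add: sym_basic(4)[OF sym])
  have "integral\<^sup>L \<nu> f = integral\<^sup>L (distr \<nu> borel ?R) f" using eq by simp
  also have "\<dots> = integral\<^sup>L \<nu> (\<lambda>x. f (?R x))" by (rule integral_distr[OF Rm f])
  finally show ?thesis .
qed

lemma norm_abs_eq:
  fixes x y :: "real^'k"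
  assumes "\<And>l. \<bar>y $ l\<bar> = \<bar>x $ l\<bar>"
  shows "norm y = norm x"
  using assms unfolding norm_vec_def by (simp add: L2_set_def)

lemma norm_perm_eq:
  fixes x :: "real^'k"
  assumes "bij q"
  shows "norm (\<chi> l. x $ q l) = norm x"
proof -
  have "(\<Sum>l\<in>UNIV. (x $ q l)\<^sup>2) = (\<Sum>l\<in>UNIV. (x $ l)\<^sup>2)"
    using sum.reindex[of q UNIV "\<lambda>l. (x $ l)\<^sup>2"] assms by (simp add: bij_def)
  then show ?thesis unfolding norm_vec_def L2_set_def by simp
qed

lemma Eset_borel: "Eset I \<in> sets (borel :: (real^'k) measure)"
proof -
  have "Eset I = {x. norm x = 1} \<inter> (\<Inter>i\<in>I. \<Inter>j\<in>-I. {x::real^'k. \<bar>x $ j\<bar> < \<bar>x $ i\<bar>})"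
    by (auto simp: Eset_def)
  moreover have "{x::real^'k. norm x = 1} \<in> sets borel"
    by (rule borel_closed) (rule closed_Collect_eq, auto intro: continuous_intros)
  moreover have "{x::real^'k. \<bar>x $ j\<bar> < \<bar>x $ i\<bar>} \<in> sets borel" for i j
    by (intro borel_open open_Collect_less continuous_intros)
  ultimately show ?thesis by auto
qed

definition wt :: "(real^'k) measure \<Rightarrow> 'k set \<Rightarrow> 'k \<Rightarrow> 'k \<Rightarrow> real" where
  "wt \<nu> J i j = (\<integral>x. indicator (Eset J) x * (x $ i * x $ j) \<partial>\<nu>)"

lemma wt_meas: "(\<lambda>x::real^'k. indicator (Eset J) x * (x $ i * x $ j)) \<in> borel_measurable borel"
proof -
  have "(\<lambda>x::real^'k. x $ i) \<in> borel_measurable borel" for i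
    by (rule borel_measurable_continuous_onI) (auto intro: continuous_intros)
  then show ?thesis using Eset_borel[of J] by measurable
qed

lemma wt_integrable:
  fixes \<nu> :: "(real^'k) measure"
  assumes sym: "symmetric_measure \<nu>"
  shows "integrable \<nu> (\<lambda>x. indicator (Eset J) x * (x $ i * x $ j))"
proof -
  have ps: "prob_space \<nu>" using sym_basic[OF sym] by simp
  then interpret prob_space \<nu> .
  show ?thesis
  proof (rule integrable_const_bound[where B=1])
    show "AE x in \<nu>. norm (indicator (Eset J) x * (x $ i * x $ j)) \<le> (1::real)"
    proof (rule AE_I2)
      fix x :: "real^'k"
      show "norm (indicator (Eset J) x * (x $ i * x $ j)) \<le> (1::real)"
      proof (cases "x \<in> Eset J")
        case True
        then have n: "norm x = 1" by (simp add: Eset_def)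
        have "\<bar>x $ i\<bar> \<le> 1" "\<bar>x $ j\<bar> \<le> 1" using component_le_norm_cart[of x] n by auto
        then have "\<bar>x $ i\<bar> * \<bar>x $ j\<bar> \<le> 1 * 1" by (intro mult_mono) auto
        then show ?thesis using True by (simp add: abs_mult)
      qed simp
    qed
    show "(\<lambda>x. indicator (Eset J) x * (x $ i * x $ j)) \<in> borel_measurable \<nu>"
      using wt_meas by (simp add: sym_basic(4)[OF sym])
  qed
qed

lemma wt_cross:
  fixes \<nu> :: "(real^'k) measure"
  assumes sym: "symmetric_measure \<nu>" and ij: "i \<noteq> j"
  shows "wt \<nu> J i j = 0"
proof -
  define \<sigma> where "\<sigma> = (\<lambda>l. if l = i then (-1::real) else 1)"
  have s: "\<sigma> \<in> signs" by (simp add: \<sigma>_def signs_def)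
  let ?f = "\<lambda>x::real^'k. indicator (Eset J) x * (x $ i * x $ j)"
  have inv: "?f (\<chi> l. \<sigma> l * x $ id l) = - ?f x" for x
  proof -
    let ?y = "\<chi> l. \<sigma> l * x $ id l"
    have ab: "\<bar>?y $ l\<bar> = \<bar>x $ l\<bar>" for l by (simp add: \<sigma>_def abs_mult)
    have "?y \<in> Eset J \<longleftrightarrow> x \<in> Eset J"
      unfolding Eset_def using norm_abs_eq[of ?y x, OF ab] ab by simp
    then show ?thesis using ij by (simp add: \<sigma>_def indicator_def)
  qed
  have "wt \<nu> J i j = integral\<^sup>L \<nu> (\<lambda>x. ?f (\<chi> l. \<sigma> l * x $ id l))"
    unfolding wt_def by (rule sym_invariant[OF sym s bij_id wt_meas])
  also have "\<dots> = - wt \<nu> J i j" unfolding inv wt_def by simp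
  finally show ?thesis by simp
qed

lemma wt_swap:
  fixes \<nu> :: "(real^'k) measure"
  assumes sym: "symmetric_measure \<nu>" and same: "a \<in> J \<longleftrightarrow> b \<in> J"
  shows "wt \<nu> J a a = wt \<nu> J b b"
proof -
  define \<sigma> where "\<sigma> = (\<lambda>l::'k. (1::real))"
  have s: "\<sigma> \<in> signs" by (simp add: \<sigma>_def signs_def)
  let ?f = "\<lambda>x::real^'k. indicator (Eset J) x * (x $ a * x $ a)"
  have pres: "sw a b l \<in> J \<longleftrightarrow> l \<in> J" for l using same by (auto simp: sw_def)
  have inv: "?f (\<chi> l. \<sigma> l * x $ sw a b l) = indicator (Eset J) x * (x $ b * x $ b)" for x
  proof -
    let ?y = "\<chi> l. \<sigma> l * x $ sw a b l"
    have y: "?y = (\<chi> l. x $ sw a b l)" by (simp add: \<sigma>_def)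
    have n: "norm ?y = norm x" using norm_perm_eq[OF bij_sw] y by simp
    have key: "(\<forall>i\<in>J. \<forall>j. j \<notin> J \<longrightarrow> \<bar>x $ sw a b j\<bar> < \<bar>x $ sw a b i\<bar>) \<longleftrightarrow>
               (\<forall>i\<in>J. \<forall>j. j \<notin> J \<longrightarrow> \<bar>x $ j\<bar> < \<bar>x $ i\<bar>)"
    proof
      assume h: "\<forall>i\<in>J. \<forall>j. j \<notin> J \<longrightarrow> \<bar>x $ sw a b j\<bar> < \<bar>x $ sw a b i\<bar>"
      show "\<forall>i\<in>J. \<forall>j. j \<notin> J \<longrightarrow> \<bar>x $ j\<bar> < \<bar>x $ i\<bar>"
      proof (intro ballI allI impI)
        fix i j assume i: "i \<in> J" and j: "j \<notin> J"
        have "sw a b i \<in> J" "sw a b j \<notin> J" using i j pres by auto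
        then have "\<bar>x $ sw a b (sw a b j)\<bar> < \<bar>x $ sw a b (sw a b i)\<bar>" using h by blast
        then show "\<bar>x $ j\<bar> < \<bar>x $ i\<bar>" by (simp add: sw_inv)
      qed
    next
      assume h: "\<forall>i\<in>J. \<forall>j. j \<notin> J \<longrightarrow> \<bar>x $ j\<bar> < \<bar>x $ i\<bar>"
      show "\<forall>i\<in>J. \<forall>j. j \<notin> J \<longrightarrow> \<bar>x $ sw a b j\<bar> < \<bar>x $ sw a b i\<bar>"
        using h pres by blast
    qed
    have "?y \<in> Eset J \<longleftrightarrow> x \<in> Eset J"
      unfolding Eset_def using n key y by simp
    then show ?thesis by (simp add: \<sigma>_def indicator_def sw_def)
  qed
  have "wt \<nu> J a a = integral\<^sup>L \<nu> (\<lambda>x. ?f (\<chi> l. \<sigma> l * x $ sw a b l))"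
    unfolding wt_def by (rule sym_invariant[OF sym s bij_sw wt_meas])
  also have "\<dots> = wt \<nu> J b b" unfolding inv wt_def by simp
  finally show ?thesis .
qed

lemma wt_order:
  fixes \<nu> :: "(real^'k) measure"
  assumes sym: "symmetric_measure \<nu>" and ab: "a \<in> J" "b \<notin> J"
  shows "wt \<nu> J b b \<le> wt \<nu> J a a" "0 \<le> wt \<nu> J b b"
proof -
  show "wt \<nu> J b b \<le> wt \<nu> J a a"
    unfolding wt_def
  proof (rule integral_mono[OF wt_integrable[OF sym] wt_integrable[OF sym]])
    fix x :: "real^'k"
    show "indicator (Eset J) x * (x $ b * x $ b) \<le> indicator (Eset J) x * (x $ a * x $ a)"
    proof (cases "x \<in> Eset J")
      case True
      then have "\<bar>x $ b\<bar> < \<bar>x $ a\<bar>" using ab by (simp add: Eset_def)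
      then have "\<bar>x $ b\<bar> * \<bar>x $ b\<bar> \<le> \<bar>x $ a\<bar> * \<bar>x $ a\<bar>" by (intro mult_mono) auto
      then show ?thesis using True by (simp add: abs_mult[symmetric])
    qed simp
  qed
  show "0 \<le> wt \<nu> J b b" unfolding wt_def by (rule integral_nonneg_AE) (simp add: indicator_def)
qed

lemma norm_sq_expand:
  fixes L :: "real^'d \<Rightarrow> real^'d" and Phi :: "real^'d^'k"
  assumes "linear L"
  shows "(norm (L (synth Phi x)))\<^sup>2 = (\<Sum>i\<in>UNIV. \<Sum>j\<in>UNIV. (x $ i * x $ j) * inner (L (Phi $ i)) (L (Phi $ j)))"
proof -
  have "L (synth Phi x) = (\<Sum>i\<in>UNIV. x $ i *\<^sub>R L (Phi $ i))"
    unfolding synth_def using assms by (simp add: linear_sum linear_scale)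
  then have "(norm (L (synth Phi x)))\<^sup>2 = inner (\<Sum>i\<in>UNIV. x $ i *\<^sub>R L (Phi $ i)) (\<Sum>j\<in>UNIV. x $ j *\<^sub>R L (Phi $ j))"
    by (simp add: dot_square_norm)
  also have "\<dots> = (\<Sum>i\<in>UNIV. \<Sum>j\<in>UNIV. (x $ i * x $ j) * inner (L (Phi $ i)) (L (Phi $ j)))"
    unfolding inner_sum_left inner_sum_right by (intro sum.cong refl) (simp add: inner_commute mult.assoc)
  finally show ?thesis .
qed

lemma P_linear: "linear (P I Psi)"
  unfolding P_def[abs_def] by (rule orth_proj_linear) simp

lemma P_cont: "continuous_on UNIV (\<lambda>x. P I Psi (synth Phi x))"
proof -
  have "linear (\<lambda>x. P I Psi (synth Phi x))"
    using linear_compose[OF synth_linear P_linear] by (simp add: o_def)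
  then show ?thesis using linear_continuous_on linear_conv_bounded_linear by blast
qed

lemma F_meas:
  fixes Phi Psi :: "real^'d^'k"
  shows "(\<lambda>x. Max {(norm (P I Psi (synth Phi x)))\<^sup>2 | I. card I \<le> S}) \<in> borel_measurable borel"
proof -
  have eq: "(\<lambda>x. Max {(norm (P I Psi (synth Phi x)))\<^sup>2 | I. card I \<le> S}) =
            (\<lambda>x. Max ((\<lambda>I. (norm (P I Psi (synth Phi x)))\<^sup>2) ` {I. card I \<le> S}))"
    by (simp add: setcompr_eq_image)
  have "(\<lambda>x. (norm (P I Psi (synth Phi x)))\<^sup>2) \<in> borel_measurable borel" for I
    by (rule borel_measurable_continuous_onI) (intro continuous_intros P_cont)
  then show ?thesis unfolding eq by (intro borel_measurable_Max) auto
qed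

definition Gsum :: "real^'d^'k \<Rightarrow> nat \<Rightarrow> real^'d^'k \<Rightarrow> real^'k \<Rightarrow> real" where
  "Gsum Phi S Psi x = (\<Sum>J\<in>{J. card J = S}. indicator (Eset J) x * (norm (P J Psi (synth Phi x)))\<^sup>2)"

lemma Gsum_expand:
  "Gsum Phi S Psi x = (\<Sum>J\<in>{J. card J = S}. \<Sum>i\<in>UNIV. \<Sum>j\<in>UNIV.
      (indicator (Eset J) x * (x $ i * x $ j)) * inner (P J Psi (Phi $ i)) (P J Psi (Phi $ j)))"
  unfolding Gsum_def norm_sq_expand[OF P_linear]
  by (simp add: sum_distrib_left mult.assoc)

lemma Gsum_meas: "Gsum Phi S Psi \<in> borel_measurable borel"
  unfolding Gsum_expand[abs_def]
  by (intro borel_measurable_sum borel_measurable_times wt_meas) simp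

lemma integral_Gsum:
  fixes \<nu> :: "(real^'k) measure" and Phi Psi :: "real^'d^'k"
  assumes sym: "symmetric_measure \<nu>"
  shows "integral\<^sup>L \<nu> (Gsum Phi S Psi) = (\<Sum>J\<in>{J. card J = S}. \<Sum>i\<in>UNIV. wt \<nu> J i i * (norm (P J Psi (Phi $ i)))\<^sup>2)"
proof -
  have int: "integrable \<nu> (\<lambda>x. (indicator (Eset J) x * (x $ i * x $ j)) * c)" for J i j and c :: real
    using wt_integrable[OF sym] by simp
  have "integral\<^sup>L \<nu> (Gsum Phi S Psi) = (\<Sum>J\<in>{J. card J = S}. \<Sum>i\<in>UNIV. \<Sum>j\<in>UNIV.
      wt \<nu> J i j * inner (P J Psi (Phi $ i)) (P J Psi (Phi $ j)))"
  proof -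
    let ?f = "\<lambda>J i j x. (indicator (Eset J) x * (x $ i * x $ j)) * inner (P J Psi (Phi $ i)) (P J Psi (Phi $ j))"
    have i1: "integrable \<nu> (\<lambda>x. \<Sum>j\<in>UNIV. ?f J i j x)" for J i
      by (rule Bochner_Integration.integrable_sum) (rule int)
    have i2: "integrable \<nu> (\<lambda>x. \<Sum>i\<in>UNIV. \<Sum>j\<in>UNIV. ?f J i j x)" for J
      by (rule Bochner_Integration.integrable_sum, rule Bochner_Integration.integrable_sum) (rule int)
    have "integral\<^sup>L \<nu> (Gsum Phi S Psi) = integral\<^sup>L \<nu> (\<lambda>x. \<Sum>J\<in>{J. card J = S}. \<Sum>i\<in>UNIV. \<Sum>j\<in>UNIV. ?f J i j x)"
      unfolding Gsum_expand[abs_def] by simp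
    also have "\<dots> = (\<Sum>J\<in>{J. card J = S}. integral\<^sup>L \<nu> (\<lambda>x. \<Sum>i\<in>UNIV. \<Sum>j\<in>UNIV. ?f J i j x))"
      by (rule Bochner_Integration.integral_sum[OF i2])
    also have "\<dots> = (\<Sum>J\<in>{J. card J = S}. \<Sum>i\<in>UNIV. integral\<^sup>L \<nu> (\<lambda>x. \<Sum>j\<in>UNIV. ?f J i j x))"
      by (intro sum.cong refl Bochner_Integration.integral_sum[OF i1])
    also have "\<dots> = (\<Sum>J\<in>{J. card J = S}. \<Sum>i\<in>UNIV. \<Sum>j\<in>UNIV. integral\<^sup>L \<nu> (?f J i j))"
      by (intro sum.cong refl, rule Bochner_Integration.integral_sum, rule int)
    also have "\<dots> = (\<Sum>J\<in>{J. card J = S}. \<Sum>i\<in>UNIV. \<Sum>j\<in>UNIV.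
      wt \<nu> J i j * inner (P J Psi (Phi $ i)) (P J Psi (Phi $ j)))"
      unfolding wt_def by simp
    finally show ?thesis .
  qed
  also have "\<dots> = (\<Sum>J\<in>{J. card J = S}. \<Sum>i\<in>UNIV. wt \<nu> J i i * (norm (P J Psi (Phi $ i)))\<^sup>2)"
  proof (intro sum.cong refl)
    fix J i
    have "(\<Sum>j\<in>UNIV. wt \<nu> J i j * inner (P J Psi (Phi $ i)) (P J Psi (Phi $ j)))
        = (\<Sum>j\<in>UNIV. if j = i then wt \<nu> J i i * inner (P J Psi (Phi $ i)) (P J Psi (Phi $ i)) else 0)"
      by (intro sum.cong refl) (auto simp: wt_cross[OF sym])
    also have "\<dots> = wt \<nu> J i i * (norm (P J Psi (Phi $ i)))\<^sup>2" by (simp add: dot_square_norm)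
    finally show "(\<Sum>j\<in>UNIV. wt \<nu> J i j * inner (P J Psi (Phi $ i)) (P J Psi (Phi $ j)))
        = wt \<nu> J i i * (norm (P J Psi (Phi $ i)))\<^sup>2" .
  qed
  finally show ?thesis .
qed

lemma per_J:
  fixes w hA hB :: "'k::finite \<Rightarrow> real"
  assumes nm: "0 \<le> n" "n \<le> m" and w: "\<And>i. w i = n + (m - n) * (if i \<in> J then 1 else 0)"
    and sA: "sum hA UNIV \<le> sum hB UNIV" and hA1: "\<And>i. i \<in> J \<Longrightarrow> hA i \<le> 1"
    and hB1: "\<And>i. i \<in> J \<Longrightarrow> hB i = 1"
  shows "(\<Sum>i\<in>UNIV. w i * hA i) \<le> (\<Sum>i\<in>UNIV. w i * hB i)"
proof -
  have split: "(\<Sum>i\<in>UNIV. w i * h i) = n * sum h UNIV + (m - n) * (\<Sum>i\<in>J. h i)" for h :: "'k \<Rightarrow> real"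
  proof -
    have "(\<Sum>i\<in>UNIV. w i * h i) = (\<Sum>i\<in>UNIV. n * h i + (m - n) * (if i \<in> J then h i else 0))"
      by (intro sum.cong refl) (simp add: w algebra_simps)
    also have "\<dots> = n * sum h UNIV + (m - n) * (\<Sum>i\<in>UNIV. if i \<in> J then h i else 0)"
      by (simp add: sum.distrib sum_distrib_left)
    also have "(\<Sum>i\<in>UNIV. if i \<in> J then h i else 0) = (\<Sum>i\<in>J. h i)"
      by (simp add: sum.If_cases)
    finally show ?thesis .
  qed
  have "(\<Sum>i\<in>J. hA i) \<le> (\<Sum>i\<in>J. hB i)" using hA1 hB1 by (intro sum_mono) auto
  then have "(m - n) * (\<Sum>i\<in>J. hA i) \<le> (m - n) * (\<Sum>i\<in>J. hB i)" using nm by (intro mult_left_mono) auto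
  moreover have "n * sum hA UNIV \<le> n * sum hB UNIV" using nm sA by (intro mult_left_mono) auto
  ultimately show ?thesis unfolding split by linarith
qed

lemma wt_nonneg: "0 \<le> wt \<nu> J a a"
  unfolding wt_def by (rule integral_nonneg_AE) (simp add: indicator_def)

lemma weights_ex:
  fixes \<nu> :: "(real^'k) measure"
  assumes sym: "symmetric_measure \<nu>" and J: "J \<noteq> {}"
  shows "\<exists>n m. 0 \<le> n \<and> n \<le> m \<and> (\<forall>i. wt \<nu> J i i = n + (m - n) * (if i \<in> J then 1 else 0))"
proof -
  obtain a where a: "a \<in> J" using J by blast
  have wa: "wt \<nu> J i i = wt \<nu> J a a" if "i \<in> J" for i
    using wt_swap[OF sym, of i J a] a that by simp
  show ?thesis
  proof (cases "- J = {}")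
    case True
    then have "\<And>i. i \<in> J" by blast
    moreover have "0 \<le> wt \<nu> J a a" by (rule wt_nonneg)
    ultimately have "\<forall>i. wt \<nu> J i i = 0 + (wt \<nu> J a a - 0) * (if i \<in> J then 1 else 0)"
      "0 \<le> (0::real)" "0 \<le> wt \<nu> J a a"
    proof -
      show "\<forall>i. wt \<nu> J i i = 0 + (wt \<nu> J a a - 0) * (if i \<in> J then 1 else 0)"
      proof
        fix i
        have "i \<in> J" using True by blast
        then show "wt \<nu> J i i = 0 + (wt \<nu> J a a - 0) * (if i \<in> J then 1 else 0)"
          using wa[of i] by simp
      qed
    qed (simp_all add: wt_nonneg)
    then show ?thesis by blast
  next
    case False
    then obtain b where b: "b \<notin> J" by blast
    have wb: "wt \<nu> J i i = wt \<nu> J b b" if "i \<notin> J" for i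
      using wt_swap[OF sym, of i J b] b that by simp
    have o: "wt \<nu> J b b \<le> wt \<nu> J a a" "0 \<le> wt \<nu> J b b" using wt_order[OF sym a b] by auto
    have "\<forall>i. wt \<nu> J i i = wt \<nu> J b b + (wt \<nu> J a a - wt \<nu> J b b) * (if i \<in> J then 1 else 0)"
    proof
      fix i
      show "wt \<nu> J i i = wt \<nu> J b b + (wt \<nu> J a a - wt \<nu> J b b) * (if i \<in> J then 1 else 0)"
      proof (cases "i \<in> J")
        case True then show ?thesis using wa[OF True] by simp
      next
        case False then show ?thesis using wb[OF False] by simp
      qed
    qed
    then show ?thesis using o by blast
  qed
qed

lemma dim_le_cardJ: "dim (span ((\<lambda>i. (Psi::real^'d^'k) $ i) ` J)) \<le> card J"
proof -
  have "dim (span ((\<lambda>i. Psi $ i) ` J)) \<le> card ((\<lambda>i. Psi $ i) ` J)"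
    by (rule dim_le_card) auto
  also have "\<dots> \<le> card J" by (rule card_image_le) simp
  finally show ?thesis .
qed

lemma dim_eq_cardJ:
  fixes Phi :: "real^'d^'k"
  assumes ci: "cindep Phi J"
  shows "dim (span ((\<lambda>i. Phi $ i) ` J)) = card J"
proof -
  have inj: "inj_on (\<lambda>i. Phi $ i) J"
  proof (rule inj_onI, rule ccontr)
    fix i j assume ij: "i \<in> J" "j \<in> J" "Phi $ i = Phi $ j" "i \<noteq> j"
    let ?b = "axis i (1::real) - axis j 1"
    have "supp_in J ?b" using ij by (auto simp: supp_in_def axis_def)
    moreover have "synth Phi ?b = 0"
      using ij by (simp add: linear_diff[OF synth_linear] synth_axis)
    moreover have "?b \<noteq> 0" using ij by (auto simp: vec_eq_iff axis_def)
    ultimately show False using ci unfolding cindep_def by blast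
  qed
  have ind: "independent ((\<lambda>i. Phi $ i) ` J)"
  proof
    assume "dependent ((\<lambda>i. Phi $ i) ` J)"
    then obtain u where u: "\<exists>v\<in>(\<lambda>i. Phi $ i) ` J. u v \<noteq> 0" "(\<Sum>v\<in>(\<lambda>i. Phi $ i) ` J. u v *\<^sub>R v) = 0"
      using dependent_finite[of "(\<lambda>i. Phi $ i) ` J"] by auto
    define b where "b = (\<chi> i. if i \<in> J then u (Phi $ i) else 0)"
    have s: "supp_in J b" by (simp add: supp_in_def b_def)
    have "synth Phi b = (\<Sum>i\<in>UNIV. if i \<in> J then u (Phi $ i) *\<^sub>R Phi $ i else 0)"
      unfolding synth_def b_def by (intro sum.cong) auto
    also have "\<dots> = (\<Sum>i\<in>J. u (Phi $ i) *\<^sub>R Phi $ i)"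
      by (simp add: sum.If_cases)
    also have "\<dots> = (\<Sum>v\<in>(\<lambda>i. Phi $ i) ` J. u v *\<^sub>R v)" by (simp add: sum.reindex[OF inj])
    also have "\<dots> = 0" by (rule u(2))
    finally have "synth Phi b = 0" .
    moreover have "b \<noteq> 0" using u(1) by (auto simp: b_def vec_eq_iff)
    ultimately show False using ci s unfolding cindep_def by blast
  qed
  have "dim (span ((\<lambda>i. Phi $ i) ` J)) = card ((\<lambda>i. Phi $ i) ` J)"
    by (rule dim_span_eq_card_independent[OF ind])
  also have "\<dots> = card J" by (rule card_image[OF inj])
  finally show ?thesis .
qed

lemma ae_ex:
  assumes "prob_space M" "AE x in M. Q x"
  shows "\<exists>x. Q x"
proof (rule ccontr)
  assume "\<not> (\<exists>x. Q x)"
  then have "AE x in M. False" using assms(2) by (auto elim: AE_mp)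
  then show False using prob_space.AE_False[OF assms(1)] by simp
qed

theorem theorem6:
  fixes Phi :: "real^'d^'k" and \<nu> :: "(real^'k) measure"
    and \<mu> \<kappa> :: real and S :: nat
  assumes "unit_norm_tight_frame Phi"
    and "\<mu> = coherence Phi"
    and "1 \<le> S" and "S \<le> CARD('k)"
    and "symmetric_measure \<nu>"
    and "\<kappa> > 0"
    and "measure \<nu> {x \<in> space \<nu>.
           Min ((\<lambda>(p, \<sigma>).
               norm (P {i. p i < S} Phi (synth Phi (cps p \<sigma> x)))
             - Max ((\<lambda>I. norm (P I Phi (synth Phi (cps p \<sigma> x))))
                      ` {I. card I \<le> S \<and> I \<noteq> {i. p i < S}}))
             ` (perms \<times> signs)) \<ge> 2 * \<kappa>} = 1"
  shows "local_max_on dictionaries (objective \<nu> Phi S) Phi"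
proof -
  note T = assms(1) and S1 = assms(3) and SK = assms(4) and sym = assms(5) and k = assms(6)
  have un: "\<forall>i. norm (Phi $ i) = 1" using T by (simp add: unit_norm_tight_frame_def)
  have ps: "prob_space \<nu>" using sym_basic[OF sym] by simp
  have aeG: "AE x in \<nu>. Min ((\<lambda>(p, \<sigma>).
               norm (P {i. p i < S} Phi (synth Phi (cps p \<sigma> x)))
             - Max ((\<lambda>I. norm (P I Phi (synth Phi (cps p \<sigma> x))))
                      ` {I. card I \<le> S \<and> I \<noteq> {i. p i < S}}))
             ` (perms \<times> signs)) \<ge> 2 * \<kappa>"
    by (rule sym_ae_G[OF sym assms(7)])
  have aemo: "AE x in \<nu>. marginOK Phi S \<kappa> x"
    using aeG by eventually_elim (rule G_marginOK[OF S1 SK])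
  obtain x0 where x0: "marginOK Phi S \<kappa> x0" using ae_ex[OF ps aemo] by blast
  have indep: "\<forall>I. card I \<le> S \<longrightarrow> cindep Phi I"
    using cindep_all[OF x0 k SK] by blast
  obtain \<epsilon> where ep: "\<epsilon> > 0" and loc: "\<And>Psi::real^'d^'k. dist Psi Phi < \<epsilon> \<Longrightarrow> (\<forall>x J. norm x = 1 \<longrightarrow> card J \<le> S \<longrightarrow>
     (\<forall>I. card I \<le> S \<and> I \<noteq> J \<longrightarrow> norm (P I Phi (synth Phi x)) + 2 * \<kappa> \<le> norm (P J Phi (synth Phi x))) \<longrightarrow>
     Max {(norm (P I Psi (synth Phi x)))\<^sup>2 | I. card I \<le> S} = (norm (P J Psi (synth Phi x)))\<^sup>2)"
    using local_Max[OF indep k un] by blast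
  have obj_eq: "objective \<nu> Phi S Psi =
      (\<Sum>J\<in>{J. card J = S}. \<Sum>i\<in>UNIV. wt \<nu> J i i * (norm (P J Psi (Phi $ i)))\<^sup>2)"
    if d: "dist Psi Phi < \<epsilon>" for Psi
  proof -
    have ae: "AE x in \<nu>. Max {(norm (P I Psi (synth Phi x)))\<^sup>2 | I. card I \<le> S} = Gsum Phi S Psi x"
      using aemo sym_ae_sphere[OF sym]
    proof eventually_elim
      case (elim x)
      obtain J where J: "card J = S" "x \<in> Eset J"
        and mar: "\<forall>I. card I \<le> S \<and> I \<noteq> J \<longrightarrow> norm (P I Phi (synth Phi x)) + 2 * \<kappa> \<le> norm (P J Phi (synth Phi x))"
        using marginOK_T[OF elim(1) k SK elim(2)] by blast
      have "Max {(norm (P I Psi (synth Phi x)))\<^sup>2 | I. card I \<le> S} = (norm (P J Psi (synth Phi x)))\<^sup>2"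
        using loc[OF d] elim(2) J(1) mar by simp
      also have "\<dots> = Gsum Phi S Psi x"
      proof -
        have "Gsum Phi S Psi x = (\<Sum>J'\<in>{J. card J = S}. if J' = J then (norm (P J Psi (synth Phi x)))\<^sup>2 else 0)"
          unfolding Gsum_def
        proof (intro sum.cong refl)
          fix J' :: "'k set" assume J': "J' \<in> {J. card J = S}"
          show "indicator (Eset J') x * (norm (P J' Psi (synth Phi x)))\<^sup>2 =
                (if J' = J then (norm (P J Psi (synth Phi x)))\<^sup>2 else 0)"
          proof (cases "J' = J")
            case True then show ?thesis using J by simp
          next
            case False
            have "x \<notin> Eset J'" using Eset_unique[of J' J x] J J' False by auto
            then show ?thesis using False by simp
          qed
        qed
        also have "\<dots> = (norm (P J Psi (synth Phi x)))\<^sup>2" using J(1) by simp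
        finally show ?thesis by simp
      qed
      finally show ?case .
    qed
    have "objective \<nu> Phi S Psi = integral\<^sup>L \<nu> (Gsum Phi S Psi)"
      unfolding objective_def
      by (rule integral_cong_AE[OF _ _ ae]) (simp_all add: sym_basic(4)[OF sym] F_meas Gsum_meas)
    also have "\<dots> = (\<Sum>J\<in>{J. card J = S}. \<Sum>i\<in>UNIV. wt \<nu> J i i * (norm (P J Psi (Phi $ i)))\<^sup>2)"
      by (rule integral_Gsum[OF sym])
    finally show ?thesis .
  qed
  show ?thesis unfolding local_max_on_def
  proof (intro conjI exI[of _ \<epsilon>] ep ballI impI)
    show "Phi \<in> dictionaries" using un by (simp add: dictionaries_def)
    fix Psi :: "real^'d^'k" assume "Psi \<in> dictionaries" and d: "dist Psi Phi < \<epsilon>"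
    have "objective \<nu> Phi S Psi = (\<Sum>J\<in>{J. card J = S}. \<Sum>i\<in>UNIV. wt \<nu> J i i * (norm (P J Psi (Phi $ i)))\<^sup>2)"
      by (rule obj_eq[OF d])
    also have "\<dots> \<le> (\<Sum>J\<in>{J. card J = S}. \<Sum>i\<in>UNIV. wt \<nu> J i i * (norm (P J Phi (Phi $ i)))\<^sup>2)"
    proof (rule sum_mono)
      fix J :: "'k set" assume J: "J \<in> {J. card J = S}"
      have Jne: "J \<noteq> {}" using J S1 by auto
      obtain n m where nm: "0 \<le> n" "n \<le> m" "\<forall>i. wt \<nu> J i i = n + (m - n) * (if i \<in> J then 1 else 0)"
        using weights_ex[OF sym Jne] by blast
      have sA: "(\<Sum>i\<in>UNIV. (norm (P J Psi (Phi $ i)))\<^sup>2) \<le> (\<Sum>i\<in>UNIV. (norm (P J Phi (Phi $ i)))\<^sup>2)"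
      proof -
        have "(\<Sum>i\<in>UNIV. (norm (P J Psi (Phi $ i)))\<^sup>2) =
              (real CARD('k) / real CARD('d)) * real (dim (span ((\<lambda>i. Psi $ i) ` J)))"
          unfolding P_def by (rule trace_tight[OF T]) simp
        also have "\<dots> \<le> (real CARD('k) / real CARD('d)) * real (card J)"
          using dim_le_cardJ[of Psi J] by (intro mult_left_mono) auto
        also have "\<dots> = (real CARD('k) / real CARD('d)) * real (dim (span ((\<lambda>i. Phi $ i) ` J)))"
          using dim_eq_cardJ[of Phi J] indep J by simp
        also have "\<dots> = (\<Sum>i\<in>UNIV. (norm (P J Phi (Phi $ i)))\<^sup>2)"
          unfolding P_def by (rule trace_tight[OF T, symmetric]) simp
        finally show ?thesis .
      qed
      have hA: "(norm (P J Psi (Phi $ i)))\<^sup>2 \<le> 1" for i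
      proof -
        have "norm (P J Psi (Phi $ i)) \<le> norm (Phi $ i)"
          unfolding P_def by (rule orth_proj_norm_le) simp
        then show ?thesis using un by (simp add: power_le_one)
      qed
      have hB: "(norm (P J Phi (Phi $ i)))\<^sup>2 = 1" if "i \<in> J" for i
      proof -
        have "P J Phi (Phi $ i) = Phi $ i"
          unfolding P_def by (rule orth_proj_fixed) (use that in \<open>auto intro: span_base\<close>)
        then show ?thesis using un by simp
      qed
      show "(\<Sum>i\<in>UNIV. wt \<nu> J i i * (norm (P J Psi (Phi $ i)))\<^sup>2)
          \<le> (\<Sum>i\<in>UNIV. wt \<nu> J i i * (norm (P J Phi (Phi $ i)))\<^sup>2)"
        by (rule per_J[OF nm(1) nm(2) spec[OF nm(3)] sA hA hB])
    qed
    also have "\<dots> = objective \<nu> Phi S Phi" using obj_eq[of Phi] ep by simp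
    finally show "objective \<nu> Phi S Psi \<le> objective \<nu> Phi S Phi" .
  qed
qed

end
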